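(* Let $f:\{0,1\}^N\to\{0,1\}$ be a Boolean function and let $\tilde f:\{0,1\}^N\to\mathbb R$ be a real multilinear polynomial in $x_0,\dots,x_{N-1}$ that approximates $f$ with error probability $\epsilon$, i.e. $|f(x)-\tilde f(x)|\le\epsilon$ for all $x\in\{0,1\}^N$. Then $$\deg(\tilde f)\;\ge\;\frac14\Big(1-\frac{3\epsilon}{1+\epsilon}\Big)^2\rho_f\,N .$$
   Context: For $x\in\{0,1\}^N$, $e_i$ is the string with a single $1$ in position $i$ and $+$ is bitwise XOR. The influence of variable $i$ is $\mathrm{Inf}_i(f)=\Pr_x[f(x)\ne f(x+e_i)]$ with $x$ uniform in $\{0,1\}^N$, and the average influence is $\rho_f=\frac1N\sum_{i=0}^{N-1}\mathrm{Inf}_i(f)$. *)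

theory Defs
  imports Complex_Main
begin

text \<open>A point x of the cube {0,1}^N is encoded by the set of coordinates i < N with x_i = 1,
  i.e. the cube is Pow {0..<N}. Flipping coordinate i (x + e_i) is symmetric difference with {i}.\<close>

definition cube :: "nat \<Rightarrow> nat set set" where
  "cube N = Pow {0..<N}"

definition flip :: "nat set \<Rightarrow> nat \<Rightarrow> nat set" where
  "flip x i = (if i \<in> x then x - {i} else insert i x)"

definition influence :: "nat \<Rightarrow> (nat set \<Rightarrow> bool) \<Rightarrow> nat \<Rightarrow> real" where
  "influence N f i = real (card {x \<in> cube N. f x \<noteq> f (flip x i)}) / 2 ^ N"

definition avg_influence :: "nat \<Rightarrow> (nat set \<Rightarrow> bool) \<Rightarrow> real" where
  "avg_influence N f = (1 / real N) * (\<Sum>i<N. influence N f i)"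

text \<open>A real multilinear polynomial in x_0..x_{N-1} is given by its coefficient function
  c on subsets S of {0..<N} (coefficient of the monomial prod_{i in S} x_i).\<close>
definition mlpoly_eval :: "nat \<Rightarrow> (nat set \<Rightarrow> real) \<Rightarrow> nat set \<Rightarrow> real" where
  "mlpoly_eval N c x = (\<Sum>S\<in>cube N. c S * (\<Prod>i\<in>S. (if i \<in> x then 1 else 0)))"

definition mlpoly_degree :: "nat \<Rightarrow> (nat set \<Rightarrow> real) \<Rightarrow> nat" where
  "mlpoly_degree N c = Max ({card S | S. S \<in> cube N \<and> c S \<noteq> 0} \<union> {0})"

end

theory Submission
  imports Defs
begin

definition En :: "nat \<Rightarrow> (nat set \<Rightarrow> real) \<Rightarrow> real" where
  "En n g = (\<Sum>i<n. \<Sum>x\<in>cube n. (g x - g (flip x i))^2)"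
definition Sq :: "nat \<Rightarrow> (nat set \<Rightarrow> real) \<Rightarrow> real" where
  "Sq n g = (\<Sum>x\<in>cube n. (g x)^2)"

lemma finite_cube[simp]: "finite (cube n)"
  by (simp add: cube_def)

lemma cube_Suc: "cube (Suc n) = cube n \<union> insert n ` cube n"
  by (simp add: cube_def atLeast0_lessThan_Suc Pow_insert)

lemma notin_cube: "x \<in> cube n \<Longrightarrow> n \<notin> x"
  by (auto simp: cube_def)

lemma sum_cube_Suc: "(\<Sum>x\<in>cube (Suc n). h x) = (\<Sum>x\<in>cube n. h x + h (insert n x))"
proof -
  have disj: "cube n \<inter> insert n ` cube n = {}" using notin_cube by blast
  have inj: "inj_on (insert n) (cube n)"
    by (rule inj_onI) (metis notin_cube insert_Diff_if Diff_insert_absorb)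
  have "(\<Sum>x\<in>cube (Suc n). h x) = (\<Sum>x\<in>cube n. h x) + (\<Sum>x\<in>insert n ` cube n. h x)"
    unfolding cube_Suc by (rule sum.union_disjoint) (auto simp: disj)
  also have "(\<Sum>x\<in>insert n ` cube n. h x) = (\<Sum>x\<in>cube n. h (insert n x))"
    using inj by (simp add: sum.reindex)
  finally show ?thesis by (simp add: sum.distrib)
qed

lemma eval_split0:
  assumes x: "x \<in> cube n"
  shows "mlpoly_eval (Suc n) c x = mlpoly_eval n c x"
proof -
  have nx: "n \<notin> x" using x notin_cube by blast
  have "mlpoly_eval (Suc n) c x = (\<Sum>S\<in>cube n. c S * (\<Prod>i\<in>S. (if i \<in> x then 1 else 0)) +
      c (insert n S) * (\<Prod>i\<in>insert n S. (if i \<in> x then 1 else 0)))"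
    unfolding mlpoly_eval_def by (rule sum_cube_Suc)
  also have "\<dots> = (\<Sum>S\<in>cube n. c S * (\<Prod>i\<in>S. (if i \<in> x then 1 else 0)))"
  proof (rule sum.cong)
    fix S assume S: "S \<in> cube n"
    have "finite S" "n \<notin> S" using S notin_cube by (auto simp: cube_def intro: finite_subset)
    then show "c S * (\<Prod>i\<in>S. (if i \<in> x then 1 else 0)) +
      c (insert n S) * (\<Prod>i\<in>insert n S. (if i \<in> x then 1 else 0 :: real)) =
      c S * (\<Prod>i\<in>S. (if i \<in> x then 1 else 0))" using nx by simp
  qed simp
  finally show ?thesis unfolding mlpoly_eval_def .
qed

lemma eval_split1:
  assumes x: "x \<in> cube n"
  shows "mlpoly_eval (Suc n) c (insert n x) = mlpoly_eval n c x + mlpoly_eval n (\<lambda>S. c (insert n S)) x"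
proof -
  have nx: "n \<notin> x" using x notin_cube by blast
  have "mlpoly_eval (Suc n) c (insert n x) = (\<Sum>S\<in>cube n. c S * (\<Prod>i\<in>S. (if i \<in> insert n x then 1 else 0)) +
      c (insert n S) * (\<Prod>i\<in>insert n S. (if i \<in> insert n x then 1 else 0)))"
    unfolding mlpoly_eval_def by (rule sum_cube_Suc)
  also have "\<dots> = (\<Sum>S\<in>cube n. c S * (\<Prod>i\<in>S. (if i \<in> x then 1 else 0)) +
      c (insert n S) * (\<Prod>i\<in>S. (if i \<in> x then 1 else 0)))"
  proof (rule sum.cong)
    fix S assume S: "S \<in> cube n"
    have fS: "finite S" and nS: "n \<notin> S" using S notin_cube by (auto simp: cube_def intro: finite_subset)
    have e: "(\<Prod>i\<in>S. (if i \<in> insert n x then 1 else 0)) = (\<Prod>i\<in>S. (if i \<in> x then 1 else 0 :: real))"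
      by (rule prod.cong) (use nS in auto)
    show "c S * (\<Prod>i\<in>S. (if i \<in> insert n x then 1 else 0)) +
      c (insert n S) * (\<Prod>i\<in>insert n S. (if i \<in> insert n x then 1 else 0 :: real)) =
      c S * (\<Prod>i\<in>S. (if i \<in> x then 1 else 0)) + c (insert n S) * (\<Prod>i\<in>S. (if i \<in> x then 1 else 0))"
      using fS nS e by simp
  qed simp
  finally show ?thesis unfolding mlpoly_eval_def by (simp add: sum.distrib)
qed

lemma flip_cube: "x \<in> cube n \<Longrightarrow> i < n \<Longrightarrow> flip x i \<in> cube n"
  by (auto simp: cube_def flip_def)

lemma flip_insert: "i \<noteq> n \<Longrightarrow> flip (insert n x) i = insert n (flip x i)"
  by (auto simp: flip_def)

lemma flip_n: "x \<in> cube n \<Longrightarrow> flip x n = insert n x \<and> flip (insert n x) n = x"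
  using notin_cube by (auto simp: flip_def)


lemma eval_lin: "mlpoly_eval n (\<lambda>S. c1 S + r * c2 S) x = mlpoly_eval n c1 x + r * mlpoly_eval n c2 x"
  unfolding mlpoly_eval_def by (simp add: sum.distrib sum_distrib_left algebra_simps)

lemma eval_scale: "mlpoly_eval n (\<lambda>S. r * c2 S) x = r * mlpoly_eval n c2 x"
  unfolding mlpoly_eval_def by (simp add: sum_distrib_left algebra_simps)

lemma energy:
  assumes "\<forall>S\<in>cube n. c S \<noteq> 0 \<longrightarrow> card S \<le> d"
  shows "En n (mlpoly_eval n c) \<le> 4 * real d * Sq n (mlpoly_eval n c)"
  using assms
proof (induction n arbitrary: c d)
  case 0
  have "Sq 0 (mlpoly_eval 0 c) \<ge> 0" unfolding Sq_def by (rule sum_nonneg) simp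
  then show ?case by (simp add: En_def)
next
  case (Suc n)
  define ca where "ca S = c S + (1/2) * c (insert n S)" for S
  define cb where "cb S = (1/2) * c (insert n S)" for S
  define a where "a = mlpoly_eval n ca"
  define b where "b = mlpoly_eval n cb"
  define G where "G = mlpoly_eval (Suc n) c"
  have aE: "a x = mlpoly_eval n c x + (1/2) * mlpoly_eval n (\<lambda>S. c (insert n S)) x" for x
    unfolding a_def ca_def by (rule eval_lin)
  have bE: "b x = (1/2) * mlpoly_eval n (\<lambda>S. c (insert n S)) x" for x
    unfolding b_def cb_def by (rule eval_scale)
  have G0: "G x = a x - b x" if "x \<in> cube n" for x
    using that unfolding G_def aE bE by (simp add: eval_split0)
  have G1: "G (insert n x) = a x + b x" if "x \<in> cube n" for x
    using that unfolding G_def aE bE by (simp add: eval_split1)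
  have ins_cube: "insert n S \<in> cube (Suc n)" "S \<in> cube (Suc n)" if "S \<in> cube n" for S
    using that by (auto simp: cube_def)
  have cardins: "card (insert n S) = Suc (card S)" if "S \<in> cube n" for S
    using that notin_cube[OF that] by (simp add: cube_def finite_subset[of _ "{0..<n}"])
  have ha: "\<forall>S\<in>cube n. ca S \<noteq> 0 \<longrightarrow> card S \<le> d"
  proof (intro ballI impI)
    fix S assume S: "S \<in> cube n" and "ca S \<noteq> 0"
    then have "c S \<noteq> 0 \<or> c (insert n S) \<noteq> 0" by (auto simp: ca_def)
    then show "card S \<le> d"
      using Suc.prems ins_cube[OF S] cardins[OF S] by force
  qed
  have hb: "\<forall>S\<in>cube n. cb S \<noteq> 0 \<longrightarrow> card S \<le> d - 1"
  proof (intro ballI impI)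
    fix S assume S: "S \<in> cube n" and "cb S \<noteq> 0"
    then have "c (insert n S) \<noteq> 0" by (auto simp: cb_def)
    then show "card S \<le> d - 1"
      using Suc.prems ins_cube[OF S] cardins[OF S] by force
  qed
  have IHa: "En n a \<le> 4 * real d * Sq n a" using Suc.IH[OF ha] a_def by simp
  have IHb: "En n b \<le> 4 * real (d - 1) * Sq n b" using Suc.IH[OF hb] b_def by simp
  have Sqb: "Sq n b \<ge> 0" unfolding Sq_def by (rule sum_nonneg) simp
  have Sqa: "Sq n a \<ge> 0" unfolding Sq_def by (rule sum_nonneg) simp
  have hb2: "4 * real (d - 1) * Sq n b + 4 * Sq n b \<le> 4 * real d * Sq n b"
  proof (cases "d = 0")
    case True
    have "cb S = 0" if "S \<in> cube n" for S
      using hb that True Suc.prems ins_cube[OF that] cardins[OF that] by (force simp: cb_def)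
    then have "b x = 0" for x unfolding b_def mlpoly_eval_def by simp
    then show ?thesis by (simp add: Sq_def)
  next
    case False
    then have "real (d - 1) = real d - 1" by simp
    then show ?thesis by (simp add: algebra_simps)
  qed
  have SqG: "Sq (Suc n) G = 2 * (Sq n a + Sq n b)"
    unfolding Sq_def sum_cube_Suc
    by (simp add: G0 G1 sum.distrib sum_distrib_left power2_eq_square algebra_simps cong: sum.cong)
  have Ei: "(\<Sum>x\<in>cube (Suc n). (G x - G (flip x i))^2) =
      2 * (\<Sum>x\<in>cube n. (a x - a (flip x i))^2) + 2 * (\<Sum>x\<in>cube n. (b x - b (flip x i))^2)"
    if i: "i < n" for i
  proof -
    have "(\<Sum>x\<in>cube (Suc n). (G x - G (flip x i))^2) =
       (\<Sum>x\<in>cube n. (G x - G (flip x i))^2 + (G (insert n x) - G (flip (insert n x) i))^2)"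
      by (rule sum_cube_Suc)
    also have "\<dots> = (\<Sum>x\<in>cube n. 2 * (a x - a (flip x i))^2 + 2 * (b x - b (flip x i))^2)"
    proof (rule sum.cong)
      fix x assume x: "x \<in> cube n"
      have fx: "flip x i \<in> cube n" using flip_cube[OF x i] .
      have fe: "flip (insert n x) i = insert n (flip x i)" using i by (simp add: flip_insert)
      show "(G x - G (flip x i))^2 + (G (insert n x) - G (flip (insert n x) i))^2 =
          2 * (a x - a (flip x i))^2 + 2 * (b x - b (flip x i))^2"
        by (simp only: fe G0[OF x] G1[OF x] G0[OF fx] G1[OF fx]) (simp add: power2_eq_square algebra_simps)
    qed simp
    finally show ?thesis by (simp add: sum.distrib sum_distrib_left)
  qed
  have En_last: "(\<Sum>x\<in>cube (Suc n). (G x - G (flip x n))^2) = 8 * Sq n b"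
  proof -
    have "(\<Sum>x\<in>cube (Suc n). (G x - G (flip x n))^2) =
       (\<Sum>x\<in>cube n. (G x - G (flip x n))^2 + (G (insert n x) - G (flip (insert n x) n))^2)"
      by (rule sum_cube_Suc)
    also have "\<dots> = (\<Sum>x\<in>cube n. 8 * (b x)^2)"
    proof (rule sum.cong)
      fix x assume x: "x \<in> cube n"
      show "(G x - G (flip x n))^2 + (G (insert n x) - G (flip (insert n x) n))^2 = 8 * (b x)^2"
        by (simp only: flip_n[OF x] G0[OF x] G1[OF x]) (simp add: power2_eq_square algebra_simps)
    qed simp
    finally show ?thesis by (simp add: Sq_def sum_distrib_left)
  qed
  have EnG: "En (Suc n) G = 2 * En n a + 2 * En n b + 8 * Sq n b"
  proof -
    have "En (Suc n) G = (\<Sum>i<n. \<Sum>x\<in>cube (Suc n). (G x - G (flip x i))^2) + 8 * Sq n b"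
      unfolding En_def by (simp add: En_last)
    also have "(\<Sum>i<n. \<Sum>x\<in>cube (Suc n). (G x - G (flip x i))^2) =
        (\<Sum>i<n. 2 * (\<Sum>x\<in>cube n. (a x - a (flip x i))^2) + 2 * (\<Sum>x\<in>cube n. (b x - b (flip x i))^2))"
      by (rule sum.cong) (simp_all add: Ei)
    finally show ?thesis unfolding En_def by (simp add: sum.distrib sum_distrib_left)
  qed
  have "En (Suc n) G \<le> 2 * (4 * real d * Sq n a) + 2 * (4 * real (d - 1) * Sq n b) + 8 * Sq n b"
    using EnG IHa IHb by linarith
  also have "\<dots> \<le> 4 * real d * Sq (Suc n) G"
    using hb2 SqG by (simp add: algebra_simps)
  finally show ?case unfolding G_def .
qed


theorem theorem6:
  fixes N :: nat and f :: "nat set \<Rightarrow> bool" and c :: "nat set \<Rightarrow> real" and \<epsilon> :: real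
  assumes "0 \<le> \<epsilon>" and "\<epsilon> < 1 / 2"
    and approx: "\<forall>x\<in>cube N. \<bar>(if f x then 1 else 0) - mlpoly_eval N c x\<bar> \<le> \<epsilon>"
  shows "real (mlpoly_degree N c) \<ge>
           (1 / 4) * (1 - 3 * \<epsilon> / (1 + \<epsilon>)) ^ 2 * avg_influence N f * real N"
proof -
  define P where "P = mlpoly_eval N c"
  define d where "d = mlpoly_degree N c"
  define T where "T = (\<Sum>i<N. real (card {x \<in> cube N. f x \<noteq> f (flip x i)}))"
  have e0: "0 \<le> \<epsilon>" and e1: "\<epsilon> < 1/2" using assms by auto
  have supp: "\<forall>S\<in>cube N. c S \<noteq> 0 \<longrightarrow> card S \<le> d"
  proof (intro ballI impI)
    fix S assume S: "S \<in> cube N" "c S \<noteq> 0"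
    have fin: "finite ({card S | S. S \<in> cube N \<and> c S \<noteq> 0} \<union> {0})"
    proof -
      have "{card S | S. S \<in> cube N \<and> c S \<noteq> 0} \<subseteq> card ` cube N" by auto
      then show ?thesis using finite_subset by auto
    qed
    show "card S \<le> d" unfolding d_def mlpoly_degree_def
      by (rule Max_ge[OF fin]) (use S in auto)
  qed
  have En: "En N P \<le> 4 * real d * Sq N P" unfolding P_def by (rule energy[OF supp])
  have bnd: "(P x)^2 \<le> (1 + \<epsilon>)^2" if x: "x \<in> cube N" for x
  proof -
    have "\<bar>(if f x then 1 else 0) - P x\<bar> \<le> \<epsilon>" using approx x P_def by auto
    then have "\<bar>P x\<bar> \<le> 1 + \<epsilon>" by (auto split: if_splits)
    then have "\<bar>P x\<bar>^2 \<le> (1 + \<epsilon>)^2" by (rule power_mono) simp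
    then show ?thesis by simp
  qed
  have Sq: "Sq N P \<le> 2 ^ N * (1 + \<epsilon>)^2"
  proof -
    have "Sq N P \<le> (\<Sum>x\<in>cube N. (1 + \<epsilon>)^2)" unfolding Sq_def by (rule sum_mono) (rule bnd)
    also have "\<dots> = 2 ^ N * (1 + \<epsilon>)^2" by (simp add: cube_def card_Pow)
    finally show ?thesis .
  qed
  have low: "(1 - 2 * \<epsilon>)^2 * real (card {x \<in> cube N. f x \<noteq> f (flip x i)})
      \<le> (\<Sum>x\<in>cube N. (P x - P (flip x i))^2)" if i: "i < N" for i
  proof -
    let ?A = "{x \<in> cube N. f x \<noteq> f (flip x i)}"
    have "(1 - 2 * \<epsilon>)^2 * real (card ?A) = (\<Sum>x\<in>?A. (1 - 2 * \<epsilon>)^2)" by simp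
    also have "\<dots> \<le> (\<Sum>x\<in>?A. (P x - P (flip x i))^2)"
    proof (rule sum_mono)
      fix x assume x: "x \<in> ?A"
      then have xc: "x \<in> cube N" and fx: "f x \<noteq> f (flip x i)" by auto
      have yc: "flip x i \<in> cube N" using flip_cube[OF xc i] .
      have h1: "\<bar>(if f x then 1 else 0) - P x\<bar> \<le> \<epsilon>" using approx xc P_def by auto
      have h2: "\<bar>(if f (flip x i) then 1 else 0) - P (flip x i)\<bar> \<le> \<epsilon>" using approx yc P_def by auto
      have "1 - 2 * \<epsilon> \<le> \<bar>P x - P (flip x i)\<bar>" using h1 h2 fx by (auto split: if_splits)
      then have "(1 - 2 * \<epsilon>)^2 \<le> \<bar>P x - P (flip x i)\<bar>^2" by (rule power_mono) (use e1 in simp)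
      then show "(1 - 2 * \<epsilon>)^2 \<le> (P x - P (flip x i))^2" by simp
    qed
    also have "\<dots> \<le> (\<Sum>x\<in>cube N. (P x - P (flip x i))^2)"
      by (rule sum_mono2) auto
    finally show ?thesis .
  qed
  have "(1 - 2 * \<epsilon>)^2 * T \<le> En N P"
    unfolding T_def En_def sum_distrib_left by (rule sum_mono) (rule low, simp)
  then have key: "(1 - 2 * \<epsilon>)^2 * T \<le> 4 * real d * (2 ^ N * (1 + \<epsilon>)^2)"
    using En Sq by (smt (verit, ccfv_SIG) mult_left_mono of_nat_0_le_iff)
  show ?thesis
  proof (cases "N = 0")
    case True
    then show ?thesis by simp
  next
    case False
    have avg: "avg_influence N f * real N = T / 2 ^ N"
    proof -
      have "avg_influence N f * real N = (\<Sum>i<N. influence N f i)"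
        using False unfolding avg_influence_def by simp
      also have "\<dots> = T / 2 ^ N" unfolding influence_def T_def by (simp add: sum_divide_distrib)
      finally show ?thesis .
    qed
    have q: "1 - 3 * \<epsilon> / (1 + \<epsilon>) = (1 - 2 * \<epsilon>) / (1 + \<epsilon>)"
      using e0 by (simp add: field_simps)
    have pos: "(0::real) < 4 * (1 + \<epsilon>)^2 * 2 ^ N" using e0 by simp
    have "(1 / 4) * (1 - 3 * \<epsilon> / (1 + \<epsilon>)) ^ 2 * avg_influence N f * real N
        = ((1 - 2 * \<epsilon>)^2 * T) / (4 * (1 + \<epsilon>)^2 * 2 ^ N)"
      unfolding mult.assoc[of _ "avg_influence N f"] avg q by (simp add: power_divide field_simps)
    also have "\<dots> \<le> real d"
      using key pos by (simp add: divide_le_eq algebra_simps)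
    finally show ?thesis unfolding d_def .
  qed
qed

end
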